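(* Let $\{(\mathbf{x}_i,\mathbf{z}_i)\}_{i=1}^n$ be given covariate vectors $\mathbf{x}_i$ and linkage-related variables $\mathbf{z}_i$ from a linked file. Consider a generic record $(\mathbf{x},\mathbf{z},m,\mathbf{y})$, where $(\mathbf{x},\mathbf{z})$ is distributed according to the probability measure $P$ placing mass $1/n$ on each of $(\mathbf{x}_1,\mathbf{z}_1),\dots,(\mathbf{x}_n,\mathbf{z}_n)$; $m\in\{0,1\}$ is a mismatch indicator; and $\mathbf{y}$ is a response whose conditional density given $\mathbf{x}$ is $f(\mathbf{y}\mid\mathbf{x};\boldsymbol\theta)$ and which satisfies $\mathbf{y}\perp \mathbf{z}\mid \mathbf{x}$. Suppose the probability of a correct match satisfies $$\mathbf{P}(m=0\mid \mathbf{x},\mathbf{y},\mathbf{z};\boldsymbol\gamma)=\mathbf{P}(m=0\mid\mathbf{z};\boldsymbol\gamma)=h(\mathbf{z};\boldsymbol\gamma)$$ for a function $h$ taking values in $[0,1)$ on the $\mathbf{z}_i$ (so that $\sum_{k=1}^n(1-h(\mathbf{z}_k;\boldsymbol\gamma))>0$). Then the conditional density of $\mathbf{y}$ given $m=1$, evaluated at any point $\mathbf{y}_i$, is $$f(\mathbf{y}_i\mid m=1)=\sum_{j=1}^n \omega_j(\mathbf{z}_j;\boldsymbol\gamma)\, f(\mathbf{y}_i\mid \mathbf{x}_j;\boldsymbol\theta),\qquad 1\le i\le n,$$ where $$\omega_j(\mathbf{z}_j;\boldsymbol\gamma)=\frac{1-h(\mathbf{z}_j;\boldsymbol\gamma)}{\sum_{k=1}^n\bigl(1-h(\mathbf{z}_k;\boldsymbol\gamma)\bigr)},\qquad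 1\le j\le n.$$
   Context: Setting: post-linkage regression. A linked file consists of pairs $(\mathbf{x}_i,\mathbf{y}_i)$, $1\le i\le n$, with auxiliary variables $\mathbf{z}_i$ related to the record linkage process, and latent mismatch indicators $m_i$ ($m_i=0$ for a correct match, $m_i=1$ for a mismatch). The regression model of interest specifies the conditional density $f(\mathbf{y}\mid\mathbf{x};\boldsymbol\theta)$ with parameter $\boldsymbol\theta$; $\boldsymbol\gamma$ parametrizes the correct-match probability $h(\mathbf{z};\boldsymbol\gamma)=\mathbf{P}(m=0\mid\mathbf{z};\boldsymbol\gamma)$. The variables $\mathbf{x}$ and $\mathbf{z}$ may overlap or be dependent (including $\mathbf{x}=\mathbf{z}$). Notation: $f(\cdot\mid\cdot)$ denotes a (conditional) density of the random variables indicated by its arguments; $\perp$ denotes conditional independence. *)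

theory Defs
  imports "HOL-Probability.Probability"
begin

definition is_cond_density ::
  "'a measure \<Rightarrow> 'y measure \<Rightarrow> ('a \<Rightarrow> 'y) \<Rightarrow> 'a set \<Rightarrow> ('y \<Rightarrow> real) \<Rightarrow> bool" where
  "is_cond_density M N Y E g \<longleftrightarrow>
     E \<in> sets M \<and> measure M E > 0 \<and>
     g \<in> borel_measurable N \<and> (\<forall>y\<in>space N. g y \<ge> 0) \<and> integrable N g \<and>
     (\<forall>B\<in>sets N. measure M {\<omega>\<in>space M. Y \<omega> \<in> B \<and> \<omega> \<in> E}
                    = measure M E * (LINT y:B|N. g y))"

definition omega :: "nat \<Rightarrow> (nat \<Rightarrow> 'z) \<Rightarrow> ('z \<Rightarrow> 'g \<Rightarrow> real) \<Rightarrow> 'g \<Rightarrow> nat \<Rightarrow> real" where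
  "omega n zs h \<gamma> j = (1 - h (zs j) \<gamma>) / (\<Sum>k<n. (1 - h (zs k) \<gamma>))"

end

theory Submission
  imports Defs
begin

theorem lemma1:
  fixes M :: "'a measure" and N :: "'y measure"
    and X :: "'a \<Rightarrow> 'x" and Z :: "'a \<Rightarrow> 'z" and m :: "'a \<Rightarrow> nat" and Y :: "'a \<Rightarrow> 'y"
    and n :: nat and xs :: "nat \<Rightarrow> 'x" and zs :: "nat \<Rightarrow> 'z"
    and f :: "'y \<Rightarrow> 'x \<Rightarrow> 't \<Rightarrow> real" and \<theta> :: 't
    and h :: "'z \<Rightarrow> 'g \<Rightarrow> real" and \<gamma> :: 'g
  assumes P: "prob_space M"
    and n_pos: "n > 0"
    and X_meas: "X \<in> measurable M (count_space UNIV)"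
    and Z_meas: "Z \<in> measurable M (count_space UNIV)"
    and m_meas: "m \<in> measurable M (count_space UNIV)"
    and Y_meas: "Y \<in> measurable M N"
    and m_01: "\<forall>\<omega>\<in>space M. m \<omega> \<in> {0, 1}"
    \<comment> \<open>(X,Z) has law placing mass 1/n on each (x_i, z_i), i < n (with multiplicity)\<close>
    and XZ_law: "\<And>a b. measure M {\<omega>\<in>space M. X \<omega> = a \<and> Z \<omega> = b}
                   = real (card {i. i < n \<and> xs i = a \<and> zs i = b}) / real n"
    \<comment> \<open>f(. | x; theta) is a density w.r.t. N\<close>
    and f_meas: "\<And>a. (\<lambda>y. f y a \<theta>) \<in> borel_measurable N"
    and f_nonneg: "\<And>a y. y \<in> space N \<Longrightarrow> f y a \<theta> \<ge> 0"
    and f_int: "\<And>a. integrable N (\<lambda>y. f y a \<theta>)"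
    \<comment> \<open>conditional density of Y given X is f(. | X; theta)\<close>
    and Y_given_X: "\<And>a B. B \<in> sets N \<Longrightarrow>
        measure M {\<omega>\<in>space M. Y \<omega> \<in> B \<and> X \<omega> = a}
          = measure M {\<omega>\<in>space M. X \<omega> = a} * (LINT y:B|N. f y a \<theta>)"
    \<comment> \<open>Y independent of Z given X\<close>
    and Y_indep_Z: "\<And>a b B. B \<in> sets N \<Longrightarrow>
        measure M {\<omega>\<in>space M. Y \<omega> \<in> B \<and> Z \<omega> = b \<and> X \<omega> = a}
          * measure M {\<omega>\<in>space M. X \<omega> = a}
        = measure M {\<omega>\<in>space M. Y \<omega> \<in> B \<and> X \<omega> = a}
          * measure M {\<omega>\<in>space M. Z \<omega> = b \<and> X \<omega> = a}"
    \<comment> \<open>P(m = 0 | x, y, z; gamma) = h(z; gamma)\<close>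
    and match_prob: "\<And>a b B. B \<in> sets N \<Longrightarrow>
        measure M {\<omega>\<in>space M. m \<omega> = 0 \<and> X \<omega> = a \<and> Z \<omega> = b \<and> Y \<omega> \<in> B}
          = h b \<gamma> * measure M {\<omega>\<in>space M. X \<omega> = a \<and> Z \<omega> = b \<and> Y \<omega> \<in> B}"
    and h_range: "\<And>i. i < n \<Longrightarrow> 0 \<le> h (zs i) \<gamma> \<and> h (zs i) \<gamma> < 1"
  shows "is_cond_density M N Y {\<omega>\<in>space M. m \<omega> = 1}
           (\<lambda>y. \<Sum>j<n. omega n zs h \<gamma> j * f y (xs j) \<theta>)"
proof -
  interpret prob_space M by (rule P)
  note [measurable] = X_meas Z_meas m_meas Y_meas
  define pr where "pr i = (xs i, zs i)" for i
  define S where "S = pr ` {..<n}"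
  define ev where "ev p = {\<omega>\<in>space M. X \<omega> = fst p \<and> Z \<omega> = snd p}" for p
  define c where "c p = card {i\<in>{..<n}. pr i = p}" for p
  define I where "I a B = (LINT y:B|N. f y a \<theta>)" for a B
  define E where "E = {\<omega>\<in>space M. m \<omega> = 1}"
  have finS: "finite S" unfolding S_def by simp
  have ev_sets[measurable]: "ev p \<in> sets M" for p unfolding ev_def by measurable
  have E_sets[measurable]: "E \<in> sets M" unfolding E_def by measurable
  have ev_meas: "measure M (ev p) = real (c p) / real n" for p
  proof -
    have "{i. i < n \<and> xs i = fst p \<and> zs i = snd p} = {i\<in>{..<n}. pr i = p}"
      unfolding pr_def by (cases p) auto
    then show ?thesis unfolding ev_def c_def using XZ_law[of "fst p" "snd p"] by simp
  qed
  have fiber: "(\<Sum>p\<in>S. g p * (real (c p) / real n)) = (\<Sum>i<n. g (pr i)) / real n" for g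
  proof -
    have "(\<Sum>i<n. g (pr i)) = (\<Sum>p\<in>S. \<Sum>i\<in>{i\<in>{..<n}. pr i = p}. g (pr i))"
      unfolding S_def by (rule sum.image_gen) simp
    also have "\<dots> = (\<Sum>p\<in>S. g p * real (c p))"
      unfolding c_def by (intro sum.cong refl) simp
    finally show ?thesis by (simp add: sum_divide_distrib)
  qed
  have disj: "disjoint_family_on ev S"
    unfolding disjoint_family_on_def ev_def by (auto simp: prod_eq_iff)
  have U1: "measure M (\<Union>p\<in>S. ev p) = 1"
  proof -
    have "measure M (\<Union>p\<in>S. ev p) = (\<Sum>p\<in>S. measure M (ev p))"
      by (rule finite_measure_finite_Union[OF finS]) (use disj in auto)
    also have "\<dots> = (\<Sum>p\<in>S. 1 * (real (c p) / real n))" by (simp add: ev_meas)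
    also have "\<dots> = 1" using fiber[of "\<lambda>_. 1"] n_pos by simp
    finally show ?thesis .
  qed
  have decomp: "measure M A = (\<Sum>p\<in>S. measure M (A \<inter> ev p))" if A: "A \<in> sets M" for A
  proof -
    let ?U = "\<Union>p\<in>S. ev p"
    have Us: "?U \<in> sets M" using finS by auto
    have "measure M (A - ?U) \<le> measure M (space M - ?U)"
      by (intro finite_measure_mono) (use A Us sets.sets_into_space in auto)
    also have "\<dots> = 0" using prob_compl[OF Us] U1 by simp
    finally have z: "measure M (A - ?U) = 0" using measure_nonneg[of M "A - ?U"] by linarith
    have "measure M A = measure M (A \<inter> ?U) + measure M (A - ?U)"
      using finite_measure_Union[of "A \<inter> ?U" "A - ?U"] A Us
      by (metis Int_Diff_Un Int_Diff_disjoint sets.Diff sets.Int)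
    also have "A \<inter> ?U = (\<Union>p\<in>S. A \<inter> ev p)" by auto
    also have "measure M \<dots> = (\<Sum>p\<in>S. measure M (A \<inter> ev p))"
      by (rule finite_measure_finite_Union[OF finS]) (use disj A in \<open>auto simp: disjoint_family_on_def ev_def\<close>)
    finally show ?thesis using z by simp
  qed
  have evpos: "measure M (ev p) > 0" if pS: "p \<in> S" for p
  proof -
    obtain i where i: "i < n" "p = pr i" using pS unfolding S_def by blast
    have "{i\<in>{..<n}. pr i = p} \<noteq> {}" using i by auto
    then have "c p > 0" unfolding c_def by (simp add: card_gt_0_iff)
    then show ?thesis using ev_meas[of p] n_pos by simp
  qed
  have Xpos: "measure M {\<omega>\<in>space M. X \<omega> = fst p} > 0" if "p \<in> S" for p
  proof -
    have "measure M (ev p) \<le> measure M {\<omega>\<in>space M. X \<omega> = fst p}"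
      by (intro finite_measure_mono) (auto simp: ev_def)
    then show ?thesis using evpos[OF that] by simp
  qed
  have YB_ev: "measure M ({\<omega>\<in>space M. Y \<omega> \<in> B} \<inter> ev p) = I (fst p) B * measure M (ev p)"
    if p: "p \<in> S" and B: "B \<in> sets N" for p B
  proof -
    obtain a b where ab: "p = (a, b)" by (cases p)
    have e1: "{\<omega>\<in>space M. Y \<omega> \<in> B} \<inter> ev p = {\<omega>\<in>space M. Y \<omega> \<in> B \<and> Z \<omega> = b \<and> X \<omega> = a}"
      unfolding ev_def ab by auto
    have e2: "ev p = {\<omega>\<in>space M. Z \<omega> = b \<and> X \<omega> = a}" unfolding ev_def ab by auto
    have "measure M ({\<omega>\<in>space M. Y \<omega> \<in> B} \<inter> ev p) * measure M {\<omega>\<in>space M. X \<omega> = a}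
        = (I a B * measure M (ev p)) * measure M {\<omega>\<in>space M. X \<omega> = a}"
      using Y_indep_Z[OF B, of b a] Y_given_X[OF B, of a] unfolding e1 unfolding e2 I_def by simp
    then show ?thesis using Xpos[OF p] ab by simp
  qed
  have I1: "I (fst p) (space N) = 1" if p: "p \<in> S" for p
  proof -
    have "{\<omega>\<in>space M. Y \<omega> \<in> space N \<and> X \<omega> = fst p} = {\<omega>\<in>space M. X \<omega> = fst p}"
      using measurable_space[OF Y_meas] by auto
    then have "measure M {\<omega>\<in>space M. X \<omega> = fst p} * 1
       = measure M {\<omega>\<in>space M. X \<omega> = fst p} * I (fst p) (space N)"
      using Y_given_X[OF sets.top, of "fst p"] unfolding I_def by simp
    then show ?thesis using Xpos[OF p] by simp
  qed
  have m1_ev: "measure M ({\<omega>\<in>space M. Y \<omega> \<in> B \<and> \<omega> \<in> E} \<inter> ev p)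
      = (1 - h (snd p) \<gamma>) * I (fst p) B * measure M (ev p)"
    if p: "p \<in> S" and B[measurable]: "B \<in> sets N" for p B
  proof -
    obtain a b where ab: "p = (a, b)" by (cases p)
    let ?A = "{\<omega>\<in>space M. Y \<omega> \<in> B} \<inter> ev p"
    let ?Bm = "{\<omega>\<in>space M. m \<omega> = 0 \<and> X \<omega> = a \<and> Z \<omega> = b \<and> Y \<omega> \<in> B}"
    have e1: "{\<omega>\<in>space M. Y \<omega> \<in> B \<and> \<omega> \<in> E} \<inter> ev p = ?A - ?Bm"
      unfolding ev_def ab E_def using m_01 by auto
    have e2: "?A = {\<omega>\<in>space M. X \<omega> = a \<and> Z \<omega> = b \<and> Y \<omega> \<in> B}" unfolding ev_def ab by auto
    have sub: "?Bm \<subseteq> ?A" unfolding ev_def ab by auto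
    have "measure M (?A - ?Bm) = measure M ?A - measure M ?Bm"
      by (rule finite_measure_Diff) (use sub in auto)
    also have "measure M ?Bm = h b \<gamma> * measure M ?A" using match_prob[OF B, of a b] e2 by simp
    finally show ?thesis using e1 YB_ev[OF p B] ab by (simp add: algebra_simps)
  qed
  have PB: "measure M {\<omega>\<in>space M. Y \<omega> \<in> B \<and> \<omega> \<in> E}
      = (\<Sum>i<n. (1 - h (zs i) \<gamma>) * I (xs i) B) / real n" if B[measurable]: "B \<in> sets N" for B
  proof -
    have "measure M {\<omega>\<in>space M. Y \<omega> \<in> B \<and> \<omega> \<in> E}
       = (\<Sum>p\<in>S. measure M ({\<omega>\<in>space M. Y \<omega> \<in> B \<and> \<omega> \<in> E} \<inter> ev p))"
      by (rule decomp) measurable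
    also have "\<dots> = (\<Sum>p\<in>S. ((1 - h (snd p) \<gamma>) * I (fst p) B) * (real (c p) / real n))"
      by (intro sum.cong refl) (simp add: m1_ev ev_meas B)
    also have "\<dots> = (\<Sum>i<n. (1 - h (zs i) \<gamma>) * I (xs i) B) / real n"
      by (subst fiber) (simp add: pr_def)
    finally show ?thesis .
  qed
  define T where "T = (\<Sum>k<n. (1 - h (zs k) \<gamma>))"
  have Tpos: "T > 0" unfolding T_def
    by (rule sum_pos) (use n_pos h_range in auto)
  have inS: "pr i \<in> S" if "i < n" for i unfolding S_def using that by auto
  have PE: "measure M E = T / real n"
  proof -
    have "E = {\<omega>\<in>space M. Y \<omega> \<in> space N \<and> \<omega> \<in> E}"
      using measurable_space[OF Y_meas] E_def by auto
    then have "measure M E = (\<Sum>i<n. (1 - h (zs i) \<gamma>) * I (xs i) (space N)) / real n"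
      using PB[OF sets.top] by simp
    also have "\<dots> = T / real n" unfolding T_def
      using I1[OF inS] by (simp add: pr_def)
    finally show ?thesis .
  qed
  have om: "omega n zs h \<gamma> j = (1 - h (zs j) \<gamma>) / T" for j unfolding omega_def T_def by simp
  have om_nn: "omega n zs h \<gamma> j \<ge> 0" if "j < n" for j
    unfolding om using Tpos h_range[OF that] by simp
  have intB: "(LINT y:B|N. (\<Sum>j<n. omega n zs h \<gamma> j * f y (xs j) \<theta>))
      = (\<Sum>j<n. omega n zs h \<gamma> j * I (xs j) B)" if B: "B \<in> sets N" for B
  proof -
    have "(\<lambda>y. indicator B y *\<^sub>R (\<Sum>j<n. omega n zs h \<gamma> j * f y (xs j) \<theta>))
        = (\<lambda>y. \<Sum>j<n. omega n zs h \<gamma> j * (indicator B y *\<^sub>R f y (xs j) \<theta>))"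
      by (auto simp: sum_distrib_left mult.left_commute)
    moreover have "integrable N (\<lambda>y. indicator B y *\<^sub>R f y a \<theta>)" for a
      by (rule integrable_mult_indicator[OF B f_int])
    ultimately show ?thesis
      unfolding set_lebesgue_integral_def I_def by (simp add: integral_sum)
  qed
  show ?thesis
    unfolding is_cond_density_def E_def[symmetric]
  proof (intro conjI ballI)
    show "E \<in> sets M" by (rule E_sets)
    show "measure M E > 0" using PE Tpos n_pos by simp
    show "(\<lambda>y. \<Sum>j<n. omega n zs h \<gamma> j * f y (xs j) \<theta>) \<in> borel_measurable N"
      using f_meas by measurable
    show "0 \<le> (\<Sum>j<n. omega n zs h \<gamma> j * f y (xs j) \<theta>)" if "y \<in> space N" for y
      by (rule sum_nonneg) (use om_nn f_nonneg that in auto)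
    show "integrable N (\<lambda>y. \<Sum>j<n. omega n zs h \<gamma> j * f y (xs j) \<theta>)"
      using f_int by auto
    show "measure M {\<omega>\<in>space M. Y \<omega> \<in> B \<and> \<omega> \<in> E}
        = measure M E * (LINT y:B|N. (\<Sum>j<n. omega n zs h \<gamma> j * f y (xs j) \<theta>))"
      if B: "B \<in> sets N" for B
    proof -
      have "measure M E * (\<Sum>j<n. omega n zs h \<gamma> j * I (xs j) B)
          = (\<Sum>j<n. (T / real n) * ((1 - h (zs j) \<gamma>) / T) * I (xs j) B)"
        using Tpos by (simp add: PE om sum_distrib_left)
      also have "\<dots> = (\<Sum>j<n. (1 - h (zs j) \<gamma>) * I (xs j) B) / real n"
        using Tpos by (simp add: sum_divide_distrib)
      finally show ?thesis using PB[OF B] intB[OF B] by simp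
    qed
  qed
qed

end
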